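(* Let $m,n$ be positive integers and for each $i\in\{1,\dots,m\}$ let $A^i\in\mathbb{R}^{n_i\times n}$. Let $A=[(A^1)^T,\dots,(A^m)^T]^T\in\mathbb{R}^{N\times n}$ with $N=\sum_i n_i\ge n$, and assume $A^TA$ is full rank. Let $\lambda$ and $\gamma$ denote the largest and smallest eigenvalues of $A^TA$, respectively. Fix $\beta>0$, let $K^*=(A^TA+\beta I)^{-1}$ with $j$-th column $k_j^*$, and let $e_j$ be the $j$-th column of the $n\times n$ identity matrix $I$. Let $K(-1)\in\mathbb{R}^{n\times n}$ be arbitrary, with columns $k_j(-1)$, and for $t=0,1,2,\dots$ define the columns of $K(t)$ by $$k_j(t)=k_j(t-1)-\alpha\sum_{i=1}^m R^i_j(t-1),\qquad R^i_j(s)=\Big((A^i)^TA^i+\tfrac{\beta}{m}I\Big)k_j(s)-\tfrac{1}{m}e_j,\quad j=1,\dots,n,$$ where $\alpha>0$ is a parameter. Define $\rho_K^*=\dfrac{\lambda-\gamma}{\lambda+\gamma+2\beta}$. Then there exists $\alpha>0$ for which there is a positive value $\rho_K<1$ such that for each $j=1,\dots,n$, $$\|k_j(t)-k_j^*\|\le\rho_K\|k_j(t-1)-k_j^*\|,\qquad t=0,1,2,\dots,$$ where $\rho_K\ge\rho_K^*$.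
   Context: $\|\cdot\|$ denotes the Euclidean 2-norm. This iteration is the pre-conditioner update of a distributed (server-based) algorithm for the least-squares problem $\min_x\sum_{i=1}^m\frac12\|A^ix-b^i\|^2$. *)

theory Defs
  imports "Jordan_Normal_Form.Char_Poly" "Jordan_Normal_Form.DL_Rank"
begin

text \<open>Stacked matrix A = [A^0; A^1; ...; A^(m-1)] (blocks indexed 0..m-1), each block with n columns.\<close>
definition stack_mats :: "(nat \<Rightarrow> real mat) \<Rightarrow> nat \<Rightarrow> nat \<Rightarrow> real mat" where
  "stack_mats A m n = foldr (\<lambda>i B. A i @\<^sub>r B) [0..<m] (0\<^sub>m 0 n)"

definition vnorm :: "real vec \<Rightarrow> real" where
  "vnorm v = sqrt (v \<bullet> v)"

definition Rres :: "(nat \<Rightarrow> real mat) \<Rightarrow> nat \<Rightarrow> nat \<Rightarrow> real \<Rightarrow> real mat \<Rightarrow> nat \<Rightarrow> nat \<Rightarrow> real vec" where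
  "Rres A m n \<beta> K i j =
     (transpose_mat (A i) * A i + (\<beta> / real m) \<cdot>\<^sub>m 1\<^sub>m n) *\<^sub>v col K j - (1 / real m) \<cdot>\<^sub>v unit_vec n j"

text \<open>Pre-conditioner iteration. Kiter ... 0 = K(-1); Kiter ... (Suc t) = K(t).\<close>
primrec Kiter :: "(nat \<Rightarrow> real mat) \<Rightarrow> nat \<Rightarrow> nat \<Rightarrow> real \<Rightarrow> real \<Rightarrow> real mat \<Rightarrow> nat \<Rightarrow> real mat" where
  "Kiter A m n \<beta> \<alpha> K0 0 = K0"
| "Kiter A m n \<beta> \<alpha> K0 (Suc t) =
     (let K = Kiter A m n \<beta> \<alpha> K0 t in
      mat_of_cols n (map (\<lambda>j. col K j - \<alpha> \<cdot>\<^sub>v vec n (\<lambda>r. \<Sum>i<m. Rres A m n \<beta> K i j $ r)) [0..<n]))"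

end

theory Submission
  imports Defs
begin

lemma cs_sum:
  fixes a b :: "nat \<Rightarrow> real"
  assumes "finite I"
  shows "(\<Sum>i\<in>I. a i * b i)^2 \<le> (\<Sum>i\<in>I. (a i)^2) * (\<Sum>i\<in>I. (b i)^2)"
proof -
  let ?A = "\<Sum>i\<in>I. (a i)^2" and ?B = "\<Sum>i\<in>I. (b i)^2" and ?C = "\<Sum>i\<in>I. a i * b i"
  have e1: "?A * ?B = (\<Sum>i\<in>I. \<Sum>j\<in>I. (a i)^2 * (b j)^2)" by (rule sum_product)
  have e2: "?A * ?B = (\<Sum>i\<in>I. \<Sum>j\<in>I. (a j)^2 * (b i)^2)"
    using e1 sum.swap[of "\<lambda>i j. (a i)^2 * (b j)^2" I I] by simp
  have e3: "?C * ?C = (\<Sum>i\<in>I. \<Sum>j\<in>I. (a i * b i) * (a j * b j))" by (rule sum_product)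
  have "0 \<le> (\<Sum>i\<in>I. \<Sum>j\<in>I. (a i * b j - a j * b i)^2)" by (intro sum_nonneg) auto
  also have "\<dots> = (\<Sum>i\<in>I. \<Sum>j\<in>I. ((a i)^2 * (b j)^2 + (a j)^2 * (b i)^2) - 2 * ((a i * b i) * (a j * b j)))"
    by (intro sum.cong refl) (simp add: power2_eq_square algebra_simps)
  also have "\<dots> = (\<Sum>i\<in>I. \<Sum>j\<in>I. (a i)^2 * (b j)^2) + (\<Sum>i\<in>I. \<Sum>j\<in>I. (a j)^2 * (b i)^2) - 2 * (\<Sum>i\<in>I. \<Sum>j\<in>I. (a i * b i) * (a j * b j))"
    by (simp only: sum_subtractf sum.distrib sum_distrib_left)
  also have "\<dots> = 2 * (?A * ?B) - 2 * (?C * ?C)" using e1 e2 e3 by simp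
  finally show ?thesis by (simp add: power2_eq_square)
qed

lemma sp_self_nonneg: "(v::real vec) \<bullet> v \<ge> 0"
  unfolding scalar_prod_def by (intro sum_nonneg) auto

lemma sp_self_pos: assumes "v \<in> carrier_vec n" "v \<noteq> 0\<^sub>v n" shows "(v::real vec) \<bullet> v > 0"
proof -
  from assms obtain i where i: "i < n" "v $ i \<noteq> 0" by (metis eq_vecI carrier_vecD index_zero_vec)
  have "v \<bullet> v = (\<Sum>k\<in>{0..<n}. v $ k * v $ k)" using assms unfolding scalar_prod_def by auto
  moreover have "0 < v $ i * v $ i" by (metis i(2) not_real_square_gt_zero)
  then have "(\<Sum>k\<in>{0..<n}. v $ k * v $ k) > 0" using i by (intro sum_pos2[of _ i]) auto
  ultimately show ?thesis by simp
qed

lemma mv_bound: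
  fixes M :: "real mat"
  assumes M: "M \<in> carrier_mat n n" and v: "v \<in> carrier_vec n"
  shows "(M *\<^sub>v v) \<bullet> (M *\<^sub>v v) \<le> (\<Sum>r<n. \<Sum>c<n. (M $$ (r,c))^2) * (v \<bullet> v)"
proof -
  have comp: "(M *\<^sub>v v) $ r = (\<Sum>c\<in>{0..<n}. M $$ (r,c) * v $ c)" if "r < n" for r
    using M v that by (auto simp: scalar_prod_def)
  have "(M *\<^sub>v v) \<bullet> (M *\<^sub>v v) = (\<Sum>r\<in>{0..<n}. ((M *\<^sub>v v) $ r)^2)"
    using M by (simp add: scalar_prod_def power2_eq_square)
  also have "\<dots> \<le> (\<Sum>r\<in>{0..<n}. (\<Sum>c\<in>{0..<n}. (M $$ (r,c))^2) * (\<Sum>c\<in>{0..<n}. (v $ c)^2))"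
    by (intro sum_mono) (simp add: comp cs_sum)
  also have "\<dots> = (\<Sum>r<n. \<Sum>c<n. (M $$ (r,c))^2) * (v \<bullet> v)"
    using v by (simp add: scalar_prod_def power2_eq_square sum_distrib_right atLeast0LessThan)
  finally show ?thesis .
qed

lemma transp_comp:
  fixes B :: "real mat"
  assumes B: "B \<in> carrier_mat k n" and u: "u \<in> carrier_vec k" and r: "r < n"
  shows "(transpose_mat B *\<^sub>v u) $ r = u \<bullet> (B *\<^sub>v unit_vec n r)"
proof -
  have "(transpose_mat B *\<^sub>v u) $ r = (transpose_mat B *\<^sub>v u) \<bullet> unit_vec n r"
    using r by simp
  also have "\<dots> = u \<bullet> (B *\<^sub>v unit_vec n r)"
    by (rule transpose_vec_mult_scalar[OF B _ u]) (use r in auto)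
  finally show ?thesis .
qed

lemma stack_lemma:
  fixes A :: "nat \<Rightarrow> real mat"
  assumes "\<forall>i\<in>set xs. A i \<in> carrier_mat (nr i) n"
  shows "foldr (\<lambda>i B. A i @\<^sub>r B) xs (0\<^sub>m 0 n) \<in> carrier_mat (sum_list (map nr xs)) n \<and>
     (\<forall>v w. v \<in> carrier_vec n \<longrightarrow> w \<in> carrier_vec n \<longrightarrow>
       (foldr (\<lambda>i B. A i @\<^sub>r B) xs (0\<^sub>m 0 n) *\<^sub>v v) \<bullet> (foldr (\<lambda>i B. A i @\<^sub>r B) xs (0\<^sub>m 0 n) *\<^sub>v w)
       = sum_list (map (\<lambda>i. (A i *\<^sub>v v) \<bullet> (A i *\<^sub>v w)) xs))"
  using assms
proof (induction xs)
  case Nil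
  then show ?case by (auto simp: scalar_prod_def)
next
  case (Cons x xs)
  let ?F = "foldr (\<lambda>i B. A i @\<^sub>r B) xs (0\<^sub>m 0 n)"
  from Cons have F: "?F \<in> carrier_mat (sum_list (map nr xs)) n"
    and IH: "\<And>v w. v \<in> carrier_vec n \<Longrightarrow> w \<in> carrier_vec n \<Longrightarrow> (?F *\<^sub>v v) \<bullet> (?F *\<^sub>v w) = sum_list (map (\<lambda>i. (A i *\<^sub>v v) \<bullet> (A i *\<^sub>v w)) xs)"
    by auto
  have Ax: "A x \<in> carrier_mat (nr x) n" using Cons.prems by auto
  show ?case
  proof (intro conjI allI impI)
    show "foldr (\<lambda>i B. A i @\<^sub>r B) (x # xs) (0\<^sub>m 0 n) \<in> carrier_mat (sum_list (map nr (x # xs))) n"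
      using F Ax by auto
    fix v w :: "real vec" assume v: "v \<in> carrier_vec n" and w: "w \<in> carrier_vec n"
    have "(foldr (\<lambda>i B. A i @\<^sub>r B) (x # xs) (0\<^sub>m 0 n) *\<^sub>v v) \<bullet> (foldr (\<lambda>i B. A i @\<^sub>r B) (x # xs) (0\<^sub>m 0 n) *\<^sub>v w)
      = ((A x *\<^sub>v v) @\<^sub>v (?F *\<^sub>v v)) \<bullet> ((A x *\<^sub>v w) @\<^sub>v (?F *\<^sub>v w))"
      using mat_mult_append[OF Ax F v] mat_mult_append[OF Ax F w] by simp
    also have "\<dots> = (A x *\<^sub>v v) \<bullet> (A x *\<^sub>v w) + (?F *\<^sub>v v) \<bullet> (?F *\<^sub>v w)"
      by (rule scalar_prod_append[of _ "nr x" _ "sum_list (map nr xs)"]) (use Ax F v w in auto)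
    finally show "(foldr (\<lambda>i B. A i @\<^sub>r B) (x # xs) (0\<^sub>m 0 n) *\<^sub>v v) \<bullet> (foldr (\<lambda>i B. A i @\<^sub>r B) (x # xs) (0\<^sub>m 0 n) *\<^sub>v w)
       = sum_list (map (\<lambda>i. (A i *\<^sub>v v) \<bullet> (A i *\<^sub>v w)) (x # xs))" using IH[OF v w] by simp
  qed
qed


lemma smult_one_mv: "(v::real vec) \<in> carrier_vec n \<Longrightarrow> (c \<cdot>\<^sub>m 1\<^sub>m n) *\<^sub>v v = c \<cdot>\<^sub>v v"
  by (intro eq_vecI) auto

theorem lemma1:
  fixes m n :: nat and nr :: "nat \<Rightarrow> nat" and A :: "nat \<Rightarrow> real mat"
    and lam gam \<beta> :: real and Kst K0 :: "real mat"
  assumes m_pos: "0 < m" and n_pos: "0 < n"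
    and A_dims: "\<forall>i<m. A i \<in> carrier_mat (nr i) n"
    and N_ge: "(\<Sum>i<m. nr i) \<ge> n"
    and full_rank: "vec_space.rank n (transpose_mat (stack_mats A m n) * stack_mats A m n) = n"
    and lam_eig: "eigenvalue (transpose_mat (stack_mats A m n) * stack_mats A m n) lam"
    and lam_max: "\<forall>\<mu>. eigenvalue (transpose_mat (stack_mats A m n) * stack_mats A m n) \<mu> \<longrightarrow> \<mu> \<le> lam"
    and gam_eig: "eigenvalue (transpose_mat (stack_mats A m n) * stack_mats A m n) gam"
    and gam_min: "\<forall>\<mu>. eigenvalue (transpose_mat (stack_mats A m n) * stack_mats A m n) \<mu> \<longrightarrow> gam \<le> \<mu>"
    and beta_pos: "0 < \<beta>"
    and Kst_dim: "Kst \<in> carrier_mat n n"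
    and Kst_inv1: "inverts_mat (transpose_mat (stack_mats A m n) * stack_mats A m n + \<beta> \<cdot>\<^sub>m 1\<^sub>m n) Kst"
    and Kst_inv2: "inverts_mat Kst (transpose_mat (stack_mats A m n) * stack_mats A m n + \<beta> \<cdot>\<^sub>m 1\<^sub>m n)"
    and K0_dim: "K0 \<in> carrier_mat n n"
  shows "\<exists>\<alpha>>0. \<exists>\<rho>K. 0 < \<rho>K \<and> \<rho>K < 1 \<and> \<rho>K \<ge> (lam - gam) / (lam + gam + 2 * \<beta>) \<and>
           (\<forall>j<n. \<forall>t. vnorm (col (Kiter A m n \<beta> \<alpha> K0 (Suc t)) j - col Kst j)
                        \<le> \<rho>K * vnorm (col (Kiter A m n \<beta> \<alpha> K0 t) j - col Kst j))"
proof -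
  define S where "S = stack_mats A m n"
  define G where "G = transpose_mat S * S"
  define M where "M = G + \<beta> \<cdot>\<^sub>m 1\<^sub>m n"
  define Nr where "Nr = sum_list (map nr [0..<m])"
  have stk: "S \<in> carrier_mat Nr n \<and> (\<forall>v w. v \<in> carrier_vec n \<longrightarrow> w \<in> carrier_vec n \<longrightarrow>
     (S *\<^sub>v v) \<bullet> (S *\<^sub>v w) = sum_list (map (\<lambda>i. (A i *\<^sub>v v) \<bullet> (A i *\<^sub>v w)) [0..<m]))"
    unfolding S_def stack_mats_def Nr_def by (rule stack_lemma) (use A_dims in auto)
  have S: "S \<in> carrier_mat Nr n" using stk by auto
  have Ssp: "(S *\<^sub>v v) \<bullet> (S *\<^sub>v w) = (\<Sum>i<m. (A i *\<^sub>v v) \<bullet> (A i *\<^sub>v w))"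
    if "v \<in> carrier_vec n" "w \<in> carrier_vec n" for v w
    using stk that by (simp add: sum_list_distinct_conv_sum_set atLeast0LessThan)
  have G: "G \<in> carrier_mat n n" using S unfolding G_def by auto
  have M: "M \<in> carrier_mat n n" using G unfolding M_def by auto
  have GS: "G *\<^sub>v v = transpose_mat S *\<^sub>v (S *\<^sub>v v)" if "v \<in> carrier_vec n" for v
    unfolding G_def using S that by (metis assoc_mult_mat_vec carrier_matD(1) carrier_matD(2) carrier_matI index_transpose_mat(2) index_transpose_mat(3))
  have Gv: "(G *\<^sub>v v) $ r = (S *\<^sub>v v) \<bullet> (S *\<^sub>v unit_vec n r)" if v: "v \<in> carrier_vec n" and r: "r < n" for v r
    using transp_comp[OF S _ r, of "S *\<^sub>v v"] v S GS[OF v] by simp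
  have Mvec: "M *\<^sub>v v = G *\<^sub>v v + \<beta> \<cdot>\<^sub>v v" if v: "v \<in> carrier_vec n" for v
    unfolding M_def using add_mult_distrib_mat_vec[OF G _ v, of "\<beta> \<cdot>\<^sub>m 1\<^sub>m n"] smult_one_mv[OF v] by auto
  have Mv: "(M *\<^sub>v v) $ r = (S *\<^sub>v v) \<bullet> (S *\<^sub>v unit_vec n r) + \<beta> * v $ r" if v: "v \<in> carrier_vec n" and r: "r < n" for v r
    using Mvec[OF v] Gv[OF v r] G v r by simp
  have vGv: "v \<bullet> (G *\<^sub>v v) = (S *\<^sub>v v) \<bullet> (S *\<^sub>v v)" if v: "v \<in> carrier_vec n" for v
  proof -
    have "v \<bullet> (G *\<^sub>v v) = (G *\<^sub>v v) \<bullet> v" using G v by (metis comm_scalar_prod mult_mat_vec_carrier)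
    also have "\<dots> = (S *\<^sub>v v) \<bullet> (S *\<^sub>v v)" unfolding GS[OF v]
      by (rule transpose_vec_mult_scalar[OF S v]) (use S v in auto)
    finally show ?thesis .
  qed
  have vMv: "v \<bullet> (M *\<^sub>v v) \<ge> \<beta> * (v \<bullet> v)" if v: "v \<in> carrier_vec n" for v
  proof -
    have "v \<bullet> (M *\<^sub>v v) = v \<bullet> (G *\<^sub>v v) + \<beta> * (v \<bullet> v)"
      unfolding Mvec[OF v] using G v by (subst scalar_prod_add_distrib[of _ n]) auto
    then show ?thesis using vGv[OF v] sp_self_nonneg[of "S *\<^sub>v v"] by simp
  qed
  have gam_nn: "gam \<ge> 0"
  proof -
    from gam_eig obtain v where ev: "eigenvector G v gam" unfolding eigenvalue_def G_def S_def by auto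
    then have v: "v \<in> carrier_vec n" and v0: "v \<noteq> 0\<^sub>v n" and Gv': "G *\<^sub>v v = gam \<cdot>\<^sub>v v"
      using G unfolding eigenvector_def by auto
    have "gam * (v \<bullet> v) = v \<bullet> (G *\<^sub>v v)" unfolding Gv' using v by simp
    also have "\<dots> \<ge> 0" using vGv[OF v] sp_self_nonneg by simp
    finally show ?thesis using sp_self_pos[OF v v0] by (simp add: zero_le_mult_iff)
  qed
  have lg: "gam \<le> lam" using lam_max gam_eig by auto
  define rs where "rs = (lam - gam) / (lam + gam + 2 * \<beta>)"
  have rs1: "rs < 1" unfolding rs_def using gam_nn lg beta_pos by (simp add: divide_less_eq)
  define C2 where "C2 = (\<Sum>r<n. \<Sum>c<n. (M $$ (r,c))^2) + \<beta>^2 + 1"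
  have "0 \<le> (\<Sum>r<n. \<Sum>c<n. (M $$ (r,c))^2)" by (intro sum_nonneg) auto
  then have C2pos: "C2 > \<beta>^2" unfolding C2_def by simp
  have C2p: "C2 > 0" using C2pos by (smt (verit) zero_le_power2)
  have MM: "(M *\<^sub>v v) \<bullet> (M *\<^sub>v v) \<le> C2 * (v \<bullet> v)" if v: "v \<in> carrier_vec n" for v
  proof -
    have "(M *\<^sub>v v) \<bullet> (M *\<^sub>v v) \<le> (\<Sum>r<n. \<Sum>c<n. (M $$ (r,c))^2) * (v \<bullet> v)" by (rule mv_bound[OF M v])
    also have "\<dots> \<le> C2 * (v \<bullet> v)" unfolding C2_def
      by (intro mult_right_mono sp_self_nonneg) simp
    finally show ?thesis .
  qed
  define \<alpha> where "\<alpha> = \<beta> / C2"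
  have apos: "\<alpha> > 0" unfolding \<alpha>_def using beta_pos C2p by simp
  define q where "q = 1 - \<beta>^2 / C2"
  have q0: "q > 0" and q1: "q < 1" unfolding q_def using C2pos C2p beta_pos by (simp_all add: field_simps)
  have contr: "(d - \<alpha> \<cdot>\<^sub>v (M *\<^sub>v d)) \<bullet> (d - \<alpha> \<cdot>\<^sub>v (M *\<^sub>v d)) \<le> q * (d \<bullet> d)" if d: "d \<in> carrier_vec n" for d
  proof -
    define y where "y = M *\<^sub>v d"
    have y: "y \<in> carrier_vec n" unfolding y_def using M d by auto
    have "(d - \<alpha> \<cdot>\<^sub>v y) \<bullet> (d - \<alpha> \<cdot>\<^sub>v y) = (\<Sum>r\<in>{0..<n}. (d $ r - \<alpha> * y $ r)^2)"
      using d y by (simp add: scalar_prod_def power2_eq_square)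
    also have "\<dots> = (\<Sum>r\<in>{0..<n}. d $ r * d $ r) - 2 * \<alpha> * (\<Sum>r\<in>{0..<n}. d $ r * y $ r) + \<alpha>^2 * (\<Sum>r\<in>{0..<n}. y $ r * y $ r)"
      by (simp add: power2_diff sum.distrib sum_subtractf sum_distrib_left algebra_simps power2_eq_square)
    also have "\<dots> = d \<bullet> d - 2 * \<alpha> * (d \<bullet> y) + \<alpha>^2 * (y \<bullet> y)"
      using d y by (simp add: scalar_prod_def)
    also have "\<dots> \<le> d \<bullet> d - 2 * \<alpha> * (\<beta> * (d \<bullet> d)) + \<alpha>^2 * (C2 * (d \<bullet> d))"
    proof -
      have "2 * \<alpha> * (\<beta> * (d \<bullet> d)) \<le> 2 * \<alpha> * (d \<bullet> y)" using vMv[OF d] apos unfolding y_def by simp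
      moreover have "\<alpha>^2 * (y \<bullet> y) \<le> \<alpha>^2 * (C2 * (d \<bullet> d))" using MM[OF d] unfolding y_def
        by (intro mult_left_mono) auto
      ultimately show ?thesis by linarith
    qed
    also have "\<dots> = q * (d \<bullet> d)" unfolding q_def \<alpha>_def using C2p by (simp add: field_simps power2_eq_square)
    finally show ?thesis unfolding y_def .
  qed
  define K where "K = Kiter A m n \<beta> \<alpha> K0"
  have Kc: "K t \<in> carrier_mat n n" for t
    by (induction t) (auto simp: K_def K0_dim Let_def)
  have Mst: "M *\<^sub>v col Kst j = unit_vec n j" if j: "j < n" for j
  proof -
    have "M * Kst = 1\<^sub>m n" using Kst_inv1 M unfolding inverts_mat_def M_def G_def S_def by auto
    then have "col (M * Kst) j = unit_vec n j" using j by simp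
    then show ?thesis using col_mult2[OF M Kst_dim j] by simp
  qed
  have step: "col (K (Suc t)) j = col (K t) j - \<alpha> \<cdot>\<^sub>v (M *\<^sub>v col (K t) j - unit_vec n j)" if j: "j < n" for t j
  proof -
    define k where "k = col (K t) j"
    have k: "k \<in> carrier_vec n" unfolding k_def using Kc[of t] by auto
    have "col (K (Suc t)) j = k - \<alpha> \<cdot>\<^sub>v vec n (\<lambda>r. \<Sum>i<m. Rres A m n \<beta> (K t) i j $ r)"
      using j Kc[of t] unfolding K_def k_def by (subst Kiter.simps) (auto simp: Let_def col_mat_of_cols)
    also have "vec n (\<lambda>r. \<Sum>i<m. Rres A m n \<beta> (K t) i j $ r) = M *\<^sub>v k - unit_vec n j"
    proof (intro eq_vecI)
      fix r assume "r < dim_vec (M *\<^sub>v k - unit_vec n j)"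
      then have r: "r < n" using M by simp
      have R: "Rres A m n \<beta> (K t) i j $ r = (A i *\<^sub>v k) \<bullet> (A i *\<^sub>v unit_vec n r) + \<beta> / real m * k $ r - 1 / real m * unit_vec n j $ r"
        if i: "i < m" for i
      proof -
        have Ai: "A i \<in> carrier_mat (nr i) n" using A_dims i by auto
        have "(transpose_mat (A i) * A i + (\<beta> / real m) \<cdot>\<^sub>m 1\<^sub>m n) *\<^sub>v k = transpose_mat (A i) *\<^sub>v (A i *\<^sub>v k) + (\<beta> / real m) \<cdot>\<^sub>v k"
          using Ai k by (subst add_mult_distrib_mat_vec[of _ n n]) (auto simp: smult_one_mv)
        then show ?thesis unfolding Rres_def k_def[symmetric] using r Ai k transp_comp[OF Ai _ r, of "A i *\<^sub>v k"] by simp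
      qed
      have "(\<Sum>i<m. Rres A m n \<beta> (K t) i j $ r) = (\<Sum>i<m. (A i *\<^sub>v k) \<bullet> (A i *\<^sub>v unit_vec n r)) + real m * (\<beta> / real m * k $ r) - real m * (1 / real m * unit_vec n j $ r)"
        using R by (simp add: sum.distrib sum_subtractf)
      also have "\<dots> = (S *\<^sub>v k) \<bullet> (S *\<^sub>v unit_vec n r) + \<beta> * k $ r - unit_vec n j $ r"
        using Ssp[OF k, of "unit_vec n r"] m_pos by simp
      also have "\<dots> = (M *\<^sub>v k - unit_vec n j) $ r" using Mv[OF k r] r M by simp
      finally show "vec n (\<lambda>r. \<Sum>i<m. Rres A m n \<beta> (K t) i j $ r) $ r = (M *\<^sub>v k - unit_vec n j) $ r" using r by simp
    qed (use M in simp)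
    finally show ?thesis unfolding k_def .
  qed
  have err: "col (K (Suc t)) j - col Kst j = (col (K t) j - col Kst j) - \<alpha> \<cdot>\<^sub>v (M *\<^sub>v (col (K t) j - col Kst j))"
    if j: "j < n" for t j
  proof -
    have k: "col (K t) j \<in> carrier_vec n" using Kc[of t] by auto
    have ks: "col Kst j \<in> carrier_vec n" using Kst_dim by auto
    have "M *\<^sub>v (col (K t) j - col Kst j) = M *\<^sub>v col (K t) j - unit_vec n j"
      using mult_minus_distrib_mat_vec[OF M k ks] Mst[OF j] by simp
    moreover have du: "dim_vec (col (K t) j) = n" "dim_vec (col Kst j) = n" "dim_vec (M *\<^sub>v col (K t) j) = n"
      using Kc[of t] Kst_dim M by auto
    ultimately show ?thesis unfolding step[OF j] by (intro eq_vecI) (auto simp: du)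
  qed
  define \<rho> where "\<rho> = max (sqrt q) ((1 + rs) / 2)"
  have r0: "0 < \<rho>" unfolding \<rho>_def using q0 by (simp add: less_max_iff_disj)
  have r1: "\<rho> < 1" unfolding \<rho>_def using q1 q0 rs1 by simp
  have r2: "(lam - gam) / (lam + gam + 2 * \<beta>) \<le> \<rho>" unfolding \<rho>_def rs_def[symmetric] using rs1 by (simp add: le_max_iff_disj)
  have main: "vnorm (col (K (Suc t)) j - col Kst j) \<le> \<rho> * vnorm (col (K t) j - col Kst j)"
    if j: "j < n" for j t
  proof -
    define d where "d = col (K t) j - col Kst j"
    have dd: "dim_vec (col (K t) j) = n" "dim_vec (col Kst j) = n" using Kc[of t] Kst_dim by auto
    have d: "d \<in> carrier_vec n" unfolding d_def carrier_vec_def using dd by simp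
    have "vnorm (col (K (Suc t)) j - col Kst j) = sqrt ((d - \<alpha> \<cdot>\<^sub>v (M *\<^sub>v d)) \<bullet> (d - \<alpha> \<cdot>\<^sub>v (M *\<^sub>v d)))"
      unfolding vnorm_def err[OF j] d_def ..
    also have "\<dots> \<le> sqrt (q * (d \<bullet> d))" using contr[OF d] by simp
    also have "\<dots> = sqrt q * vnorm d" unfolding vnorm_def by (simp add: real_sqrt_mult)
    also have "\<dots> \<le> \<rho> * vnorm d" unfolding \<rho>_def vnorm_def
      by (intro mult_right_mono) (auto simp: sp_self_nonneg)
    finally show ?thesis unfolding d_def .
  qed
  show ?thesis
  proof (rule exI[of _ \<alpha>], rule conjI[OF apos], rule exI[of _ \<rho>], intro conjI r0 r1 r2 allI impI)
    fix j t assume "j < n"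
    then show "vnorm (col (Kiter A m n \<beta> \<alpha> K0 (Suc t)) j - col Kst j) \<le> \<rho> * vnorm (col (Kiter A m n \<beta> \<alpha> K0 t) j - col Kst j)"
      using main[of j t] unfolding K_def by simp
  qed
qed

end
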